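(* Let $a,c,d,\gamma\in\mathbb{R}$ with $a>-1$, $a-\gamma c\ge -1$ and $\gamma>0$. If $n$ is an integer with $n\ge 1+\gamma^{-1}$, then $$\Big\lfloor \frac{\lceil a+c+nd\rceil}{n}\Big\rfloor\le \lceil a+d\rceil.$$ *)

theory Defs
  imports Complex_Main
begin
end

theory Submission
  imports Defs
begin

theorem lemma1p3:
  fixes a c d \<gamma> :: real and n :: int
  assumes "a > -1" and "a - \<gamma> * c \<ge> -1" and "\<gamma> > 0"
    and "real_of_int n \<ge> 1 + 1 / \<gamma>"
  shows "\<lfloor>real_of_int \<lceil>a + c + real_of_int n * d\<rceil> / real_of_int n\<rfloor> \<le> \<lceil>a + d\<rceil>"
proof -
  define m where "m = \<lceil>a + d\<rceil>"
  have md: "a + d \<le> real_of_int m" unfolding m_def by simp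
  have g1: "(real_of_int n - 1) * \<gamma> \<ge> 1"
    using assms(3,4) by (simp add: field_simps)
  have n0: "real_of_int n > 0" using assms(3,4)
    by (smt (verit) divide_pos_pos)
  have gc: "\<gamma> * c \<le> a + 1" using assms(2) by linarith
  have "\<gamma> * c \<le> \<gamma> * ((real_of_int n - 1) * (a + 1))"
  proof -
    have "a + 1 \<le> (real_of_int n - 1) * \<gamma> * (a + 1)"
      using g1 assms(1) by (simp add: mult_le_cancel_right1)
    thus ?thesis using gc by (simp add: algebra_simps)
  qed
  hence c: "c \<le> (real_of_int n - 1) * (a + 1)" using assms(3) by simp
  have "real_of_int n * d \<le> real_of_int n * (real_of_int m - a)"
    using md n0 by (intro mult_left_mono) auto
  hence "a + c + real_of_int n * d \<le> real_of_int (n * m + n - 1)"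
    using c by (simp add: algebra_simps)
  hence "\<lceil>a + c + real_of_int n * d\<rceil> \<le> n * m + n - 1"
    by (rule ceiling_le)
  hence "\<lceil>a + c + real_of_int n * d\<rceil> < n * (m + 1)"
    by (simp add: algebra_simps)
  hence "real_of_int \<lceil>a + c + real_of_int n * d\<rceil> < real_of_int n * (real_of_int m + 1)"
    by (metis of_int_1 of_int_add of_int_less_iff of_int_mult)
  hence "real_of_int \<lceil>a + c + real_of_int n * d\<rceil> / real_of_int n < real_of_int m + 1"
    using n0 by (simp add: divide_less_eq mult.commute)
  hence "\<lfloor>real_of_int \<lceil>a + c + real_of_int n * d\<rceil> / real_of_int n\<rfloor> < m + 1"
    by (metis floor_less_iff of_int_1 of_int_add)
  thus ?thesis unfolding m_def by simp
qed

end
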